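(* If $X\subset\mathbb{R}^n$ is a set of linearly separable labeled points in strong general position, then the orthogonal projections of the convex hulls of the positive and negative support vectors onto the separating hyperplane intersect at a single Radon point.
   Context: Setting: hard-margin support vector machine. We are given data points $\mathbf{x}_1,\dots,\mathbf{x}_m\in\mathbb{R}^n$ with labels $y_i\in\{-1,1\}$, assumed linearly separable. The SVM solves $\arg\min_{\mathbf{w},b}\frac12\|\mathbf{w}\|^2$ subject to $y_i(\mathbf{w}^T\mathbf{x}_i+b)\ge 1$ for all $i$. The separating hyperplane is $\{\mathbf{x}:\mathbf{w}^T\mathbf{x}+b=0\}$, and the support vectors are the $\mathbf{x}_i$ with $y_i(\mathbf{w}^T\mathbf{x}_i+b)=1$ (those lying on the margin). By the KKT conditions, $\mathbf{w}=\sum_i \alpha_i y_i\mathbf{x}_i$ with Lagrange multipliers $\alpha_i\ge 0$ and $\sum_i\alpha_i y_i=0$. A $k$-flat is a $k$-dimensional affine subspace. A labeled linearly separable set $X\subseteq\mathbb{R}^n$ is in strong general position if (i) for $k+l\le n$, no disjoint $k$-flats and $l$-flats (spanned by points of $X$) contain parallel vectors; and (ii) when the SVM is applied to $X$, the vector $\mathbf{w}$ can be uniquely written as $\mathbf{w}=\sum_{i:\alpha_i>0}\alpha_i y_i\mathbf{x}_i$ with $\alpha_i\ge 0$. Writing $X=X_-\cup X_+$ and letting $\rho$ be the orthogonal projection onto the separating hyperplane, a Radon point is a point in $\rho(\mathrm{conv}(X_-))\cap\rho(\mathrm{conv}(X_+))$, where $\mathrm{conv}$ denotes convex hull. *)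

theory Defs
  imports "HOL-Analysis.Analysis"
begin

text \<open>Labelled data: Xp = points with label +1, Xm = points with label -1, in R^n = real^'n.\<close>

definition lin_separable :: "(real^'n) set \<Rightarrow> (real^'n) set \<Rightarrow> bool" where
  "lin_separable Xp Xm \<longleftrightarrow>
     (\<exists>w b. (\<forall>x\<in>Xp. w \<bullet> x + b > 0) \<and> (\<forall>x\<in>Xm. w \<bullet> x + b < 0))"

definition svm_feasible :: "(real^'n) set \<Rightarrow> (real^'n) set \<Rightarrow> real^'n \<Rightarrow> real \<Rightarrow> bool" where
  "svm_feasible Xp Xm w b \<longleftrightarrow>
     (\<forall>x\<in>Xp. 1 * (w \<bullet> x + b) \<ge> 1) \<and> (\<forall>x\<in>Xm. (-1) * (w \<bullet> x + b) \<ge> 1)"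

definition svm_solution :: "(real^'n) set \<Rightarrow> (real^'n) set \<Rightarrow> real^'n \<Rightarrow> real \<Rightarrow> bool" where
  "svm_solution Xp Xm w b \<longleftrightarrow> svm_feasible Xp Xm w b \<and>
     (\<forall>w' b'. svm_feasible Xp Xm w' b' \<longrightarrow> (1/2) * (norm w)\<^sup>2 \<le> (1/2) * (norm w')\<^sup>2)"

definition support_pos :: "(real^'n) set \<Rightarrow> real^'n \<Rightarrow> real \<Rightarrow> (real^'n) set" where
  "support_pos Xp w b = {x \<in> Xp. 1 * (w \<bullet> x + b) = 1}"

definition support_neg :: "(real^'n) set \<Rightarrow> real^'n \<Rightarrow> real \<Rightarrow> (real^'n) set" where
  "support_neg Xm w b = {x \<in> Xm. (-1) * (w \<bullet> x + b) = 1}"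

definition hyperplane_proj :: "real^'n \<Rightarrow> real \<Rightarrow> real^'n \<Rightarrow> real^'n" where
  "hyperplane_proj w b x = x - ((w \<bullet> x + b) / (norm w)\<^sup>2) *\<^sub>R w"

definition kkt_multiplier ::
  "(real^'n) set \<Rightarrow> (real^'n) set \<Rightarrow> real^'n \<Rightarrow> real \<Rightarrow> (real^'n \<Rightarrow> real) \<Rightarrow> bool" where
  "kkt_multiplier Xp Xm w b \<alpha> \<longleftrightarrow>
     (\<forall>x. \<alpha> x \<ge> 0) \<and>
     (\<forall>x. x \<notin> support_pos Xp w b \<union> support_neg Xm w b \<longrightarrow> \<alpha> x = 0) \<and>
     (\<Sum>x\<in>Xp. \<alpha> x) - (\<Sum>x\<in>Xm. \<alpha> x) = 0 \<and>
     w = (\<Sum>x\<in>Xp. \<alpha> x *\<^sub>R x) - (\<Sum>x\<in>Xm. \<alpha> x *\<^sub>R x)"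

definition flat_dir :: "(real^'n) set \<Rightarrow> (real^'n) set" where
  "flat_dir A = {p - q | p q. p \<in> affine hull A \<and> q \<in> affine hull A}"

definition sgp_flats :: "(real^'n) set \<Rightarrow> bool" where
  "sgp_flats X \<longleftrightarrow>
     (\<forall>A B (k::nat) (l::nat). A \<subseteq> X \<longrightarrow> B \<subseteq> X \<longrightarrow>
        aff_dim A = int k \<longrightarrow> aff_dim B = int l \<longrightarrow> k + l \<le> CARD('n) \<longrightarrow>
        affine hull A \<inter> affine hull B = {} \<longrightarrow>
        \<not> (\<exists>u v c. u \<noteq> 0 \<and> v \<noteq> 0 \<and> u \<in> flat_dir A \<and> v \<in> flat_dir B \<and> v = c *\<^sub>R u))"

definition strong_general_position :: "(real^'n) set \<Rightarrow> (real^'n) set \<Rightarrow> bool" where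
  "strong_general_position Xp Xm \<longleftrightarrow>
     sgp_flats (Xp \<union> Xm) \<and>
     (\<forall>w b. svm_solution Xp Xm w b \<longrightarrow> (\<exists>!\<alpha>. kkt_multiplier Xp Xm w b \<alpha>))"

definition radon_points :: "(real^'n) set \<Rightarrow> (real^'n) set \<Rightarrow> real^'n \<Rightarrow> real \<Rightarrow> (real^'n) set" where
  "radon_points Xp Xm w b =
     hyperplane_proj w b ` (convex hull Xm) \<inter> hyperplane_proj w b ` (convex hull Xp)"

end

theory Submission
  imports Defs
begin

theorem lemma5p2:
  fixes Xp Xm :: "(real^'n) set" and w :: "real^'n" and b :: real
  assumes "finite Xp" and "finite Xm" and "Xp \<noteq> {}" and "Xm \<noteq> {}"
    and "lin_separable Xp Xm"
    and "strong_general_position Xp Xm"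
    and "svm_solution Xp Xm w b"
  shows "\<exists>p. hyperplane_proj w b ` (convex hull (support_neg Xm w b))
             \<inter> hyperplane_proj w b ` (convex hull (support_pos Xp w b)) = {p}
           \<and> p \<in> radon_points Xp Xm w b"
proof -
  define Sp where "Sp = support_pos Xp w b"
  define Sn where "Sn = support_neg Xm w b"
  define \<rho> where "\<rho> = hyperplane_proj w b"
  have feas: "svm_feasible Xp Xm w b" using assms(7) unfolding svm_solution_def by blast
  have hp: "\<forall>x\<in>Xp. w \<bullet> x + b \<ge> 1" and hm: "\<forall>x\<in>Xm. w \<bullet> x + b \<le> -1"
    using feas unfolding svm_feasible_def by auto
  have disj: "Xp \<inter> Xm = {}" using hp hm by force
  have wnz: "w \<noteq> 0"
  proof
    assume "w = 0"
    obtain x y where "x \<in> Xp" "y \<in> Xm" using assms(3,4) by blast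
    then show False using hp hm \<open>w = 0\<close> by force
  qed
  obtain \<alpha> where ka: "kkt_multiplier Xp Xm w b \<alpha>"
    and uniq: "\<And>\<beta>. kkt_multiplier Xp Xm w b \<beta> \<Longrightarrow> \<beta> = \<alpha>"
    using assms(6,7) unfolding strong_general_position_def by metis
  have Sp_sub: "Sp \<subseteq> Xp" and Sn_sub: "Sn \<subseteq> Xm"
    unfolding Sp_def Sn_def support_pos_def support_neg_def by auto
  have finSp: "finite Sp" and finSn: "finite Sn"
    using Sp_sub Sn_sub assms(1,2) finite_subset by auto
  have Sp_eq: "\<And>x. x \<in> Sp \<Longrightarrow> w \<bullet> x = 1 - b" unfolding Sp_def support_pos_def by auto
  have Sn_eq: "\<And>x. x \<in> Sn \<Longrightarrow> w \<bullet> x = -1 - b" unfolding Sn_def support_neg_def by auto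
  have a_nonneg: "\<And>x. \<alpha> x \<ge> 0" using ka unfolding kkt_multiplier_def by blast
  have a_zero: "\<And>x. x \<notin> Sp \<union> Sn \<Longrightarrow> \<alpha> x = 0"
    using ka unfolding kkt_multiplier_def Sp_def Sn_def by blast
  have a_sum0: "(\<Sum>x\<in>Xp. \<alpha> x) - (\<Sum>x\<in>Xm. \<alpha> x) = 0"
    using ka unfolding kkt_multiplier_def by blast
  then have a_sum: "(\<Sum>x\<in>Xp. \<alpha> x) = (\<Sum>x\<in>Xm. \<alpha> x)" by linarith
  have a_w: "w = (\<Sum>x\<in>Xp. \<alpha> x *\<^sub>R x) - (\<Sum>x\<in>Xm. \<alpha> x *\<^sub>R x)"
    using ka unfolding kkt_multiplier_def by blast
  have zp: "\<And>x. x \<in> Xp - Sp \<Longrightarrow> \<alpha> x = 0"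
    using a_zero Sn_sub disj by blast
  have zn: "\<And>x. x \<in> Xm - Sn \<Longrightarrow> \<alpha> x = 0"
    using a_zero Sp_sub disj by blast
  have s1: "(\<Sum>x\<in>Xp. \<alpha> x) = (\<Sum>x\<in>Sp. \<alpha> x)"
    by (rule sum.mono_neutral_right[OF assms(1) Sp_sub]) (use zp in auto)
  have s2: "(\<Sum>x\<in>Xm. \<alpha> x) = (\<Sum>x\<in>Sn. \<alpha> x)"
    by (rule sum.mono_neutral_right[OF assms(2) Sn_sub]) (use zn in auto)
  have s3: "(\<Sum>x\<in>Xp. \<alpha> x *\<^sub>R x) = (\<Sum>x\<in>Sp. \<alpha> x *\<^sub>R x)"
    by (rule sum.mono_neutral_right[OF assms(1) Sp_sub]) (use zp in auto)
  have s4: "(\<Sum>x\<in>Xm. \<alpha> x *\<^sub>R x) = (\<Sum>x\<in>Sn. \<alpha> x *\<^sub>R x)"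
    by (rule sum.mono_neutral_right[OF assms(2) Sn_sub]) (use zn in auto)
  define A where "A = (\<Sum>x\<in>Sp. \<alpha> x)"
  have AN: "(\<Sum>x\<in>Sn. \<alpha> x) = A" using a_sum s1 s2 A_def by simp
  have wA: "w = (\<Sum>x\<in>Sp. \<alpha> x *\<^sub>R x) - (\<Sum>x\<in>Sn. \<alpha> x *\<^sub>R x)"
    using a_w s3 s4 by simp
  have ww: "w \<bullet> w = 2 * A"
  proof -
    have "w \<bullet> w = (\<Sum>x\<in>Sp. \<alpha> x * (w \<bullet> x)) - (\<Sum>x\<in>Sn. \<alpha> x * (w \<bullet> x))"
      by (subst (2) wA) (simp add: inner_diff_right inner_sum_right)
    also have "\<dots> = (\<Sum>x\<in>Sp. \<alpha> x * (1 - b)) - (\<Sum>x\<in>Sn. \<alpha> x * (-1 - b))"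
      using Sp_eq Sn_eq by simp
    also have "\<dots> = A * (1 - b) - A * (-1 - b)"
      by (simp add: sum_distrib_right[symmetric] A_def AN)
    finally show ?thesis by (simp add: algebra_simps)
  qed
  have nw: "(norm w)\<^sup>2 = 2 * A" using ww by (simp add: power2_norm_eq_inner)
  have Apos: "A > 0" using wnz nw by (smt (verit) zero_less_power2 zero_less_norm_iff)
  define cp where "cp = (\<Sum>x\<in>Sp. (\<alpha> x / A) *\<^sub>R x)"
  define cn where "cn = (\<Sum>x\<in>Sn. (\<alpha> x / A) *\<^sub>R x)"
  have cp_in: "cp \<in> convex hull Sp"
    unfolding convex_hull_finite[OF finSp] cp_def
    using a_nonneg Apos by (auto simp: sum_divide_distrib[symmetric] A_def intro!: exI[of _ "\<lambda>x. \<alpha> x / A"])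
  have cn_in: "cn \<in> convex hull Sn"
    unfolding convex_hull_finite[OF finSn] cn_def
    using a_nonneg Apos AN by (auto simp: sum_divide_distrib[symmetric] intro!: exI[of _ "\<lambda>x. \<alpha> x / A"])
  have cdiff: "cp - cn = (1 / A) *\<^sub>R w"
  proof -
    have "(1 / A) *\<^sub>R w = (\<Sum>x\<in>Sp. (1/A) *\<^sub>R (\<alpha> x *\<^sub>R x)) - (\<Sum>x\<in>Sn. (1/A) *\<^sub>R (\<alpha> x *\<^sub>R x))"
      by (subst wA) (simp add: scaleR_diff_right scaleR_sum_right)
    then show ?thesis unfolding cp_def cn_def by simp
  qed
  have hullP: "convex hull Sp \<subseteq> {x. w \<bullet> x = 1 - b}"
    by (rule hull_minimal) (use Sp_eq convex_hyperplane in auto)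
  have hullN: "convex hull Sn \<subseteq> {x. w \<bullet> x = -1 - b}"
    by (rule hull_minimal) (use Sn_eq convex_hyperplane in auto)
  have rhoP: "\<And>x. x \<in> convex hull Sp \<Longrightarrow> \<rho> x = x - (1 / (2 * A)) *\<^sub>R w"
    using hullP unfolding \<rho>_def hyperplane_proj_def nw by auto
  have rhoN: "\<And>x. x \<in> convex hull Sn \<Longrightarrow> \<rho> x = x + (1 / (2 * A)) *\<^sub>R w"
    using hullN unfolding \<rho>_def hyperplane_proj_def nw by auto
  have halfA: "(1 / A) *\<^sub>R w = (1 / (2 * A)) *\<^sub>R w + (1 / (2 * A)) *\<^sub>R w"
    using Apos by (simp add: scaleR_add_left[symmetric])
  define p where "p = \<rho> cp"
  have p_n: "p = \<rho> cn"
  proof -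
    define h where "h = (1 / (2 * A)) *\<^sub>R w"
    have e1: "\<rho> cp = cp - h" using rhoP[OF cp_in] h_def by simp
    have e2: "\<rho> cn = cn + h" using rhoN[OF cn_in] h_def by simp
    have "cp = cn + (h + h)" using cdiff halfA h_def by (metis add_diff_cancel_left' diff_add_cancel)
    then show ?thesis unfolding p_def using e1 e2 by simp
  qed
  have key: "\<And>u v. (\<forall>x\<in>Sp. 0 \<le> u x) \<Longrightarrow> sum u Sp = 1 \<Longrightarrow> (\<forall>x\<in>Sn. 0 \<le> v x) \<Longrightarrow> sum v Sn = 1
     \<Longrightarrow> (\<Sum>x\<in>Sp. u x *\<^sub>R x) - (\<Sum>x\<in>Sn. v x *\<^sub>R x) = (1 / A) *\<^sub>R w
     \<Longrightarrow> (\<Sum>x\<in>Sp. u x *\<^sub>R x) = cp"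
  proof -
    fix u v
    assume u0: "\<forall>x\<in>Sp. 0 \<le> u x" and u1: "sum u Sp = 1" and v0: "\<forall>x\<in>Sn. 0 \<le> v x"
      and v1: "sum v Sn = 1" and uv: "(\<Sum>x\<in>Sp. u x *\<^sub>R x) - (\<Sum>x\<in>Sn. v x *\<^sub>R x) = (1 / A) *\<^sub>R w"
    define \<beta> where "\<beta> x = (if x \<in> Sp then A * u x else if x \<in> Sn then A * v x else 0)" for x
    have SpSn: "Sp \<inter> Sn = {}" using Sp_sub Sn_sub disj by blast
    have bP: "\<And>x. x \<in> Sp \<Longrightarrow> \<beta> x = A * u x" unfolding \<beta>_def by simp
    have bN: "\<And>x. x \<in> Sn \<Longrightarrow> \<beta> x = A * v x" unfolding \<beta>_def using SpSn by auto
    have zbp: "\<And>x. x \<in> Xp - Sp \<Longrightarrow> \<beta> x = 0" unfolding \<beta>_def using Sn_sub disj by auto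
    have zbn: "\<And>x. x \<in> Xm - Sn \<Longrightarrow> \<beta> x = 0" unfolding \<beta>_def using Sp_sub disj by auto
    have t1: "(\<Sum>x\<in>Xp. \<beta> x) = (\<Sum>x\<in>Sp. \<beta> x)"
      by (rule sum.mono_neutral_right[OF assms(1) Sp_sub]) (use zbp in auto)
    have t2: "(\<Sum>x\<in>Xm. \<beta> x) = (\<Sum>x\<in>Sn. \<beta> x)"
      by (rule sum.mono_neutral_right[OF assms(2) Sn_sub]) (use zbn in auto)
    have t3: "(\<Sum>x\<in>Xp. \<beta> x *\<^sub>R x) = (\<Sum>x\<in>Sp. \<beta> x *\<^sub>R x)"
      by (rule sum.mono_neutral_right[OF assms(1) Sp_sub]) (use zbp in auto)
    have t4: "(\<Sum>x\<in>Xm. \<beta> x *\<^sub>R x) = (\<Sum>x\<in>Sn. \<beta> x *\<^sub>R x)"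
      by (rule sum.mono_neutral_right[OF assms(2) Sn_sub]) (use zbn in auto)
    have "(\<Sum>x\<in>Sp. \<beta> x) = A" using bP u1 by (simp add: sum_distrib_left[symmetric])
    moreover have "(\<Sum>x\<in>Sn. \<beta> x) = A" using bN v1 by (simp add: sum_distrib_left[symmetric])
    moreover have "(\<Sum>x\<in>Sp. \<beta> x *\<^sub>R x) = A *\<^sub>R (\<Sum>x\<in>Sp. u x *\<^sub>R x)"
      using bP by (simp add: scaleR_sum_right)
    moreover have "(\<Sum>x\<in>Sn. \<beta> x *\<^sub>R x) = A *\<^sub>R (\<Sum>x\<in>Sn. v x *\<^sub>R x)"
      using bN by (simp add: scaleR_sum_right)
    moreover have "A *\<^sub>R (\<Sum>x\<in>Sp. u x *\<^sub>R x) - A *\<^sub>R (\<Sum>x\<in>Sn. v x *\<^sub>R x) = w"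
      using uv Apos by (simp add: scaleR_diff_right[symmetric])
    moreover have "\<forall>x. \<beta> x \<ge> 0" unfolding \<beta>_def using u0 v0 Apos by auto
    moreover have "\<forall>x. x \<notin> support_pos Xp w b \<union> support_neg Xm w b \<longrightarrow> \<beta> x = 0"
      unfolding \<beta>_def Sp_def Sn_def by auto
    ultimately have "kkt_multiplier Xp Xm w b \<beta>"
      unfolding kkt_multiplier_def using t1 t2 t3 t4 by simp
    then have "\<beta> = \<alpha>" by (rule uniq)
    then have "\<And>x. x \<in> Sp \<Longrightarrow> u x = \<alpha> x / A" using bP Apos by (metis nonzero_eq_divide_eq mult.commute less_irrefl)
    then show "(\<Sum>x\<in>Sp. u x *\<^sub>R x) = cp" unfolding cp_def by simp
  qed
  have inter: "\<rho> ` (convex hull Sn) \<inter> \<rho> ` (convex hull Sp) = {p}"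
  proof
    show "{p} \<subseteq> \<rho> ` (convex hull Sn) \<inter> \<rho> ` (convex hull Sp)"
      using p_n p_def cp_in cn_in by (metis IntI empty_subsetI image_eqI insert_subset)
  next
    show "\<rho> ` (convex hull Sn) \<inter> \<rho> ` (convex hull Sp) \<subseteq> {p}"
    proof
      fix q assume "q \<in> \<rho> ` (convex hull Sn) \<inter> \<rho> ` (convex hull Sp)"
      then obtain pn pp where pn: "pn \<in> convex hull Sn" and pp: "pp \<in> convex hull Sp"
        and qn: "q = \<rho> pn" and qp: "q = \<rho> pp" by blast
      obtain u where u0: "\<forall>x\<in>Sp. 0 \<le> u x" and u1: "sum u Sp = 1" and ue: "(\<Sum>x\<in>Sp. u x *\<^sub>R x) = pp"
        using pp unfolding convex_hull_finite[OF finSp] by blast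
      obtain v where v0: "\<forall>x\<in>Sn. 0 \<le> v x" and v1: "sum v Sn = 1" and ve: "(\<Sum>x\<in>Sn. v x *\<^sub>R x) = pn"
        using pn unfolding convex_hull_finite[OF finSn] by blast
      have "pp - (1 / (2 * A)) *\<^sub>R w = pn + (1 / (2 * A)) *\<^sub>R w"
        using qn qp rhoP[OF pp] rhoN[OF pn] by simp
      then have "pp - pn = (1 / A) *\<^sub>R w" using halfA by (simp add: algebra_simps)
      then have "pp = cp" using key[OF u0 u1 v0 v1] ue ve by simp
      then show "q \<in> {p}" using qp p_def by simp
    qed
  qed
  have "p \<in> radon_points Xp Xm w b"
  proof -
    have "p \<in> \<rho> ` (convex hull Xm)"
      using p_n cn_in hull_mono[OF Sn_sub] by blast
    moreover have "p \<in> \<rho> ` (convex hull Xp)"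
      using p_def cp_in hull_mono[OF Sp_sub] by blast
    ultimately show ?thesis unfolding radon_points_def \<rho>_def by blast
  qed
  then show ?thesis using inter unfolding \<rho>_def Sp_def Sn_def by blast
qed

end
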